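(* Let $G$ be a finite simple undirected graph, and let $c:V(G)\to \mathbb{R}_{>0}$ and $\kappa:V(G)\to \mathbb{Z}$ be functions such that $0\leq \kappa(u)\leq d_G(u)$ for every vertex $u$ of $G$. Then $$\beta(G,c,\kappa) \leq \sum_{u\in V(G)} \frac{c(u)\big(d_G(u)-\kappa(u)\big)\big(d_G(u)-\kappa(u)+1\big)}{2(d_G(u)+1)}.$$
   Context: $d_G(u)$ denotes the degree of $u$ in $G$, and $[n]=\{1,\dots,n\}$. For a function $\lambda:V(G)\to\mathbb{Z}$, a set $I\subseteq V(G)$ is called $\lambda$-degenerate in $G$ if there is a linear ordering $u_1,\ldots,u_k$ of the vertices of $I$ such that for every $i\in[k]$, $u_i$ has at most $\lambda(u_i)$ neighbors in $\{u_j: j\in[i-1]\}$. Define $$\beta(G,c,\kappa)=\min\Big\{\sum_{u\in V(G)} c(u)\iota(u) : \iota:V(G)\to\mathbb{Z}_{\geq 0} \text{ and } V(G) \text{ is } (\kappa+\iota)\text{-degenerate in } G\Big\}.$$ *)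

theory Defs
  imports Main Complex_Main
begin

definition simple_graph :: "'a set \<Rightarrow> ('a \<Rightarrow> 'a \<Rightarrow> bool) \<Rightarrow> bool" where
  "simple_graph V E \<longleftrightarrow> finite V \<and> (\<forall>u v. E u v \<longrightarrow> E v u) \<and> (\<forall>u. \<not> E u u)
     \<and> (\<forall>u v. E u v \<longrightarrow> u \<in> V \<and> v \<in> V)"

definition degree :: "'a set \<Rightarrow> ('a \<Rightarrow> 'a \<Rightarrow> bool) \<Rightarrow> 'a \<Rightarrow> nat" where
  "degree V E u = card {v \<in> V. E u v}"

definition degenerate :: "('a \<Rightarrow> 'a \<Rightarrow> bool) \<Rightarrow> ('a \<Rightarrow> int) \<Rightarrow> 'a set \<Rightarrow> bool" where
  "degenerate E lam I \<longleftrightarrow> (\<exists>us. distinct us \<and> set us = I \<and>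
     (\<forall>i < length us. int (card {j. j < i \<and> E (us ! i) (us ! j)}) \<le> lam (us ! i)))"

text \<open>beta(G,c,kappa): minimum of sum c(u) iota(u) over iota : V \<rightarrow> Z_{\<ge>0} with V
  (kappa+iota)-degenerate. iota is represented as a nat-valued function; only its
  values on V matter.\<close>
definition beta :: "'a set \<Rightarrow> ('a \<Rightarrow> 'a \<Rightarrow> bool) \<Rightarrow> ('a \<Rightarrow> real) \<Rightarrow> ('a \<Rightarrow> int) \<Rightarrow> real" where
  "beta V E c \<kappa> = Inf {(\<Sum>u\<in>V. c u * real (\<iota> u)) | \<iota> :: 'a \<Rightarrow> nat.
      degenerate E (\<lambda>u. \<kappa> u + int (\<iota> u)) V}"

end

theory Submission
  imports Defs
begin

definition bkc :: "('a \<Rightarrow> 'a \<Rightarrow> bool) \<Rightarrow> 'a list \<Rightarrow> nat \<Rightarrow> nat" where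
  "bkc E us i = card {j. j < i \<and> E (us!i) (us!j)}"

definition gg :: "nat \<Rightarrow> int \<Rightarrow> real" where
  "gg x k = real (nat (int x - k))"

definition cost :: "('a \<Rightarrow> 'a \<Rightarrow> bool) \<Rightarrow> ('a \<Rightarrow> real) \<Rightarrow> ('a \<Rightarrow> int) \<Rightarrow> 'a list \<Rightarrow> real" where
  "cost E c \<kappa> us = (\<Sum>i<length us. c (us!i) * gg (bkc E us i) (\<kappa> (us!i)))"

definition FF :: "nat \<Rightarrow> int \<Rightarrow> real" where
  "FF d k = (\<Sum>x\<le>d. gg x k) / (real d + 1)"

lemma bkc_snoc: "i < length us \<Longrightarrow> bkc E (us@[v]) i = bkc E us i"
  unfolding bkc_def by (intro arg_cong[where f=card]) (auto simp: nth_append)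

lemma bkc_last:
  assumes "distinct us"
  shows "bkc E (us@[v]) (length us) = card {w\<in>set us. E v w}"
proof -
  have "{w\<in>set us. E v w} = (\<lambda>j. us!j) ` {j. j < length us \<and> E v (us!j)}"
    by (auto simp: in_set_conv_nth)
  moreover have "inj_on (\<lambda>j. us!j) {j. j < length us \<and> E v (us!j)}"
    using assms by (auto simp: inj_on_def nth_eq_iff_index_eq)
  ultimately have "card {w\<in>set us. E v w} = card {j. j < length us \<and> E v (us!j)}"
    by (simp add: card_image)
  moreover have "{j. j < length (us@[v]) \<and> j < length us \<and> E ((us@[v])!length us) ((us@[v])!j)} = {j. j < length us \<and> E v (us!j)}"
    by (auto simp: nth_append)
  moreover have "bkc E (us@[v]) (length us) = card {j. j < length us \<and> E v (us!j)}"
    unfolding bkc_def by (intro arg_cong[where f=card]) (auto simp: nth_append)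
  ultimately show ?thesis by simp
qed

lemma cost_snoc:
  "cost E c \<kappa> (us@[v]) = cost E c \<kappa> us + c v * gg (bkc E (us@[v]) (length us)) (\<kappa> v)"
  unfolding cost_def by (simp add: nth_append bkc_snoc)

lemma FF_rec: "gg d k + real d * FF (d - 1) k = (real d + 1) * FF d k"
proof (cases d)
  case 0
  then show ?thesis by (simp add: FF_def)
next
  case (Suc m)
  have "real d * FF (d - 1) k = (\<Sum>x\<le>m. gg x k)"
    using Suc by (simp add: FF_def add.commute)
  moreover have "(real d + 1) * FF d k = (\<Sum>x\<le>d. gg x k)"
    unfolding FF_def by (simp add: field_simps add_pos_nonneg)
  ultimately show ?thesis using Suc by simp
qed

lemma avg_exists:
  fixes a :: "'b \<Rightarrow> real"
  assumes "finite A" "A \<noteq> {}" "sum a A \<le> real (card A) * T"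
  shows "\<exists>v\<in>A. a v \<le> T"
proof (rule ccontr)
  assume "\<not> ?thesis"
  then have "\<forall>v\<in>A. T < a v" by auto
  then have "(\<Sum>v\<in>A. T) < sum a A" using assms by (intro sum_strict_mono) auto
  then show False using assms by simp
qed

lemma deg_remove:
  assumes "v \<in> V" "finite V"
  shows "degree (V - {v}) E u = (if E u v then degree V E u - 1 else degree V E u)"
proof -
  have "{w\<in>V-{v}. E u w} = {w\<in>V. E u w} - {v}" by auto
  then show ?thesis unfolding degree_def using assms
    by (auto simp: card_Diff_singleton)
qed

lemma alg_aux:
  fixes A B C D n cc :: real
  assumes "A + D * B = (D + 1) * C"
  shows "cc * (D * B + (n - 1 - D) * C) + cc * A = cc * (n * C)"
  using assms by algebra

lemma sum_if_skip:
  fixes f :: "'b \<Rightarrow> real"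
  assumes "finite V"
  shows "(\<Sum>u\<in>V. if u = v then 0 else f u) = (\<Sum>u\<in>V-{v}. f u)"
proof -
  have "(\<Sum>u\<in>V. if u = v then 0 else f u) = (\<Sum>u\<in>V-{v}. if u = v then 0 else f u)"
    using assms by (intro sum.mono_neutral_right) auto
  also have "\<dots> = (\<Sum>u\<in>V-{v}. f u)" by (intro sum.cong) auto
  finally show ?thesis .
qed

lemma main:
  assumes "finite V" "\<forall>u. \<not> E u u"
  shows "\<exists>us. distinct us \<and> set us = V \<and>
     cost E c \<kappa> us \<le> (\<Sum>u\<in>V. c u * FF (degree V E u) (\<kappa> u))"
  using assms(1)
proof (induction "card V" arbitrary: V rule: less_induct)
  case less
  show ?case
  proof (cases "V = {}")
    case True
    then show ?thesis by (intro exI[of _ "[]"]) (simp add: cost_def)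
  next
    case False
    define T where "T = (\<Sum>u\<in>V. c u * FF (degree V E u) (\<kappa> u))"
    define S where "S W = (\<Sum>u\<in>W. c u * FF (degree W E u) (\<kappa> u))" for W
    have "\<forall>v\<in>V. \<exists>us. distinct us \<and> set us = V - {v} \<and> cost E c \<kappa> us \<le> S (V - {v})"
    proof
      fix v assume "v \<in> V"
      then have "card (V - {v}) < card V" using less.prems by (meson card_Diff1_less)
      then show "\<exists>us. distinct us \<and> set us = V - {v} \<and> cost E c \<kappa> us \<le> S (V - {v})"
        using less.hyps[of "V - {v}"] less.prems unfolding S_def by auto
    qed
    then obtain U where U: "\<And>v. v \<in> V \<Longrightarrow> distinct (U v) \<and> set (U v) = V - {v} \<and> cost E c \<kappa> (U v) \<le> S (V - {v})"
      by metis
    define a where "a v = S (V - {v}) + c v * gg (degree V E v) (\<kappa> v)" for v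
    have dv: "degree V E v = card {w\<in>V-{v}. E v w}" for v
      unfolding degree_def using assms(2) by (intro arg_cong[where f=card]) auto
    have key: "\<And>u. u \<in> V \<Longrightarrow> (\<Sum>v\<in>V-{u}. FF (degree (V-{v}) E u) (\<kappa> u))
        = real (degree V E u) * FF (degree V E u - 1) (\<kappa> u)
          + (real (card V) - 1 - real (degree V E u)) * FF (degree V E u) (\<kappa> u)"
    proof -
      fix u assume u: "u \<in> V"
      let ?d = "degree V E u"
      have "(\<Sum>v\<in>V-{u}. FF (degree (V-{v}) E u) (\<kappa> u))
          = (\<Sum>v\<in>V-{u}. if E u v then FF (?d - 1) (\<kappa> u) else FF ?d (\<kappa> u))"
        using less.prems by (intro sum.cong) (auto simp: deg_remove)
      also have "\<dots> = (\<Sum>v\<in>{v\<in>V-{u}. E u v}. FF (?d - 1) (\<kappa> u))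
             + (\<Sum>v\<in>{v\<in>V-{u}. \<not> E u v}. FF ?d (\<kappa> u))"
        using less.prems by (simp add: sum.If_cases) (simp add: Int_def set_diff_eq conj_ac)
      also have "\<dots> = real (card {v\<in>V-{u}. E u v}) * FF (?d - 1) (\<kappa> u)
             + real (card {v\<in>V-{u}. \<not> E u v}) * FF ?d (\<kappa> u)" by simp
      also have "card {v\<in>V-{u}. E u v} = ?d" using dv by simp
      also have "card {v\<in>V-{u}. \<not> E u v} = card V - 1 - ?d"
      proof -
        have "card {v\<in>V-{u}. E u v} + card {v\<in>V-{u}. \<not> E u v} = card (V - {u})"
          using less.prems by (subst card_Un_disjoint[symmetric]) (auto intro: arg_cong[where f=card])
        then show ?thesis using dv u less.prems by (simp add: card_Diff_singleton)
      qed
      also have "real (card V - 1 - ?d) = real (card V) - 1 - real ?d"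
      proof -
        have "?d \<le> card (V - {u})" unfolding dv by (rule card_mono) (use less.prems in auto)
        moreover have "card V > 0" using u less.prems by (auto simp: card_gt_0_iff)
        ultimately have h: "card V - 1 - ?d + ?d + 1 = card V" using u less.prems by (simp add: card_Diff_singleton)
        have "real (card V - 1 - ?d + ?d + 1) = real (card V)" using h by simp
        then show ?thesis by linarith
      qed
      finally show "(\<Sum>v\<in>V-{u}. FF (degree (V-{v}) E u) (\<kappa> u))
        = real ?d * FF (?d - 1) (\<kappa> u) + (real (card V) - 1 - real ?d) * FF ?d (\<kappa> u)" .
    qed
    have "sum a V = (\<Sum>v\<in>V. S (V - {v})) + (\<Sum>v\<in>V. c v * gg (degree V E v) (\<kappa> v))"
      unfolding a_def by (simp add: sum.distrib)
    also have "(\<Sum>v\<in>V. S (V - {v})) = (\<Sum>v\<in>V. \<Sum>u\<in>V. if u = v then 0 else c u * FF (degree (V-{v}) E u) (\<kappa> u))"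
      unfolding S_def
      by (rule sum.cong[OF refl]) (simp add: sum_if_skip less.prems)
    also have "\<dots> = (\<Sum>u\<in>V. \<Sum>v\<in>V. if u = v then 0 else c u * FF (degree (V-{v}) E u) (\<kappa> u))"
      by (rule sum.swap)
    also have "\<dots> = (\<Sum>u\<in>V. c u * (\<Sum>v\<in>V-{u}. FF (degree (V-{v}) E u) (\<kappa> u)))"
    proof (rule sum.cong[OF refl])
      fix u
      have "(\<Sum>v\<in>V. if u = v then 0 else c u * FF (degree (V-{v}) E u) (\<kappa> u))
          = (\<Sum>v\<in>V. if v = u then 0 else c u * FF (degree (V-{v}) E u) (\<kappa> u))"
        by (intro sum.cong) auto
      also have "\<dots> = (\<Sum>v\<in>V-{u}. c u * FF (degree (V-{v}) E u) (\<kappa> u))"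
        using less.prems by (rule sum_if_skip)
      finally show "(\<Sum>v\<in>V. if u = v then 0 else c u * FF (degree (V-{v}) E u) (\<kappa> u))
          = c u * (\<Sum>v\<in>V-{u}. FF (degree (V-{v}) E u) (\<kappa> u))"
        by (simp add: sum_distrib_left)
    qed
    also have "\<dots> = (\<Sum>u\<in>V. c u * (real (degree V E u) * FF (degree V E u - 1) (\<kappa> u)
          + (real (card V) - 1 - real (degree V E u)) * FF (degree V E u) (\<kappa> u)))"
      by (intro sum.cong refl) (simp add: key)
    also have "\<dots> + (\<Sum>v\<in>V. c v * gg (degree V E v) (\<kappa> v)) = (\<Sum>u\<in>V. c u * (real (card V) * FF (degree V E u) (\<kappa> u)))"
      unfolding sum.distrib[symmetric]
    proof (rule sum.cong[OF refl])
      fix u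
      have "gg (degree V E u) (\<kappa> u) + real (degree V E u) * FF (degree V E u - 1) (\<kappa> u)
          = (real (degree V E u) + 1) * FF (degree V E u) (\<kappa> u)" by (rule FF_rec)
      from alg_aux[OF this] show "c u * (real (degree V E u) * FF (degree V E u - 1) (\<kappa> u) +
          (real (card V) - 1 - real (degree V E u)) * FF (degree V E u) (\<kappa> u)) +
         c u * gg (degree V E u) (\<kappa> u) = c u * (real (card V) * FF (degree V E u) (\<kappa> u))"
        .
    qed
    also have "\<dots> = real (card V) * T" unfolding T_def by (simp add: sum_distrib_left algebra_simps)
    finally have "sum a V \<le> real (card V) * T" by simp
    then obtain v where v: "v \<in> V" "a v \<le> T" using avg_exists[of V a T] less.prems False by auto
    let ?us = "U v @ [v]"
    have "distinct ?us" "set ?us = V" using U[OF v(1)] v(1) by auto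
    moreover have "cost E c \<kappa> ?us = cost E c \<kappa> (U v) + c v * gg (degree V E v) (\<kappa> v)"
      using U[OF v(1)] by (simp add: cost_snoc bkc_last dv)
    ultimately show ?thesis using U[OF v(1)] v unfolding a_def T_def
      by (intro exI[of _ ?us]) auto
  qed
qed

lemma gg_sum:
  assumes "0 \<le> k"
  shows "2 * (\<Sum>x\<le>d. gg x k) = real (nat (int d - k)) * (real (nat (int d - k)) + 1)"
proof (induction d)
  case 0
  then show ?case using assms by (simp add: gg_def)
next
  case (Suc d)
  show ?case
  proof (cases "k \<le> int d")
    case True
    then have e: "nat (int (Suc d) - k) = nat (int d - k) + 1" by simp
    have "2 * (\<Sum>x\<le>Suc d. gg x k) = 2 * gg (Suc d) k + 2 * (\<Sum>x\<le>d. gg x k)" by simp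
    also have "\<dots> = 2 * (real (nat (int d - k)) + 1) + real (nat (int d - k)) * (real (nat (int d - k)) + 1)"
      using Suc.IH e by (simp add: gg_def)
    finally show ?thesis using e by (simp add: algebra_simps)
  next
    case False
    then have "nat (int (Suc d) - k) = 0" "nat (int d - k) = 0" by auto
    then show ?thesis using Suc.IH by (simp add: gg_def)
  qed
qed

lemma FF_closed:
  assumes "0 \<le> k" "k \<le> int d"
  shows "FF d k = (real d - of_int k) * (real d - of_int k + 1) / (2 * (real d + 1))"
proof -
  have r: "real (nat (int d - k)) = real d - of_int k" using assms by simp
  have "(\<Sum>x\<le>d. gg x k) = (real d - of_int k) * (real d - of_int k + 1) / 2"
    using gg_sum[OF assms(1), of d] r by simp
  then show ?thesis unfolding FF_def by (simp only: divide_divide_eq_left mult.commute)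
qed

lemma sum_set_nth:
  assumes "distinct us"
  shows "sum f (set us) = (\<Sum>i<length us. f (us!i))"
proof -
  have "set us = (\<lambda>i. us!i) ` {..<length us}" by (auto simp: in_set_conv_nth)
  moreover have "inj_on (\<lambda>i. us!i) {..<length us}"
    using assms by (auto simp: inj_on_def nth_eq_iff_index_eq)
  ultimately show ?thesis by (simp add: sum.reindex)
qed

theorem theorem1:
  fixes V :: "'a set" and E :: "'a \<Rightarrow> 'a \<Rightarrow> bool"
    and c :: "'a \<Rightarrow> real" and \<kappa> :: "'a \<Rightarrow> int"
  assumes "simple_graph V E"
    and "\<forall>u\<in>V. c u > 0"
    and "\<forall>u\<in>V. 0 \<le> \<kappa> u \<and> \<kappa> u \<le> int (degree V E u)"
  shows "beta V E c \<kappa> \<le>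
    (\<Sum>u\<in>V. c u * (real (degree V E u) - of_int (\<kappa> u))
                 * (real (degree V E u) - of_int (\<kappa> u) + 1)
              / (2 * (real (degree V E u) + 1)))"
proof -
  have fin: "finite V" and irr: "\<forall>u. \<not> E u u" using assms(1) unfolding simple_graph_def by auto
  obtain us where us: "distinct us" "set us = V"
    "cost E c \<kappa> us \<le> (\<Sum>u\<in>V. c u * FF (degree V E u) (\<kappa> u))"
    using main[of V E c \<kappa>] fin irr by blast
  define idx where "idx u = the_inv_into {..<length us} (\<lambda>i. us!i) u" for u
  have idx: "idx (us!i) = i" if "i < length us" for i
  proof -
    have "inj_on (\<lambda>i. us!i) {..<length us}"
      using us(1) by (auto simp: inj_on_def nth_eq_iff_index_eq)
    then show ?thesis unfolding idx_def using that by (simp add: the_inv_into_f_f)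
  qed
  define io where "io u = nat (int (bkc E us (idx u)) - \<kappa> u)" for u
  have deg: "degenerate E (\<lambda>u. \<kappa> u + int (io u)) V"
    unfolding degenerate_def
  proof (intro exI[of _ us] conjI allI impI)
    fix i assume "i < length us"
    then have "idx (us!i) = i" by (simp add: idx)
    then show "int (card {j. j < i \<and> E (us ! i) (us ! j)}) \<le> \<kappa> (us!i) + int (io (us!i))"
      unfolding io_def bkc_def by simp
  qed (use us in auto)
  have eq: "(\<Sum>u\<in>V. c u * real (io u)) = cost E c \<kappa> us"
  proof -
    have "(\<Sum>u\<in>V. c u * real (io u)) = (\<Sum>i<length us. c (us!i) * real (io (us!i)))"
      using sum_set_nth[OF us(1)] us(2) by simp
    also have "\<dots> = cost E c \<kappa> us" unfolding cost_def
    proof (rule sum.cong[OF refl])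
      fix i assume "i \<in> {..<length us}"
      then have "idx (us!i) = i" by (simp add: idx)
      then show "c (us!i) * real (io (us!i)) = c (us!i) * gg (bkc E us i) (\<kappa> (us!i))"
        unfolding io_def gg_def by simp
    qed
    finally show ?thesis .
  qed
  have "beta V E c \<kappa> \<le> (\<Sum>u\<in>V. c u * real (io u))"
    unfolding beta_def
  proof (rule cInf_lower)
    show "(\<Sum>u\<in>V. c u * real (io u)) \<in> {\<Sum>u\<in>V. c u * real (\<iota> u) |\<iota>. degenerate E (\<lambda>u. \<kappa> u + int (\<iota> u)) V}"
      using deg by blast
    show "bdd_below {\<Sum>u\<in>V. c u * real (\<iota> u) |\<iota>. degenerate E (\<lambda>u. \<kappa> u + int (\<iota> u)) V}"
    proof (rule bdd_belowI[of _ 0])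
      fix x assume "x \<in> {\<Sum>u\<in>V. c u * real (\<iota> u) |\<iota>. degenerate E (\<lambda>u. \<kappa> u + int (\<iota> u)) V}"
      then obtain \<iota> where "x = (\<Sum>u\<in>V. c u * real (\<iota> u))" by blast
      moreover have "0 \<le> (\<Sum>u\<in>V. c u * real (\<iota> u))"
        using assms(2) by (intro sum_nonneg) (simp add: less_imp_le)
      ultimately show "0 \<le> x" by simp
    qed
  qed
  also have "\<dots> \<le> (\<Sum>u\<in>V. c u * FF (degree V E u) (\<kappa> u))" using eq us(3) by simp
  also have "\<dots> = (\<Sum>u\<in>V. c u * (real (degree V E u) - of_int (\<kappa> u))
                 * (real (degree V E u) - of_int (\<kappa> u) + 1)
              / (2 * (real (degree V E u) + 1)))"
  proof (rule sum.cong[OF refl])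
    fix u assume "u \<in> V"
    then show "c u * FF (degree V E u) (\<kappa> u) = c u * (real (degree V E u) - of_int (\<kappa> u))
                 * (real (degree V E u) - of_int (\<kappa> u) + 1)
              / (2 * (real (degree V E u) + 1))"
      using assms(3) by (simp add: FF_closed)
  qed
  finally show ?thesis .
qed

end
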